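(* Let $U_1,U_2,V_1,V_2$ be independent real random variables. Assume there exist $0\le c_0\le1$ and $x_0>0$ such that for all $0\le x\le x_0$, $$\mathbb P(|U_1|\ge x)=\mathbb P(|V_1|\ge x)(1+\theta_{1,x}),\qquad\mathbb P(|U_2|\ge x)=\mathbb P(|V_2|\ge x)(1+\theta_{2,x}),$$ with $|\theta_{1,x}|\le c_0$ and $|\theta_{2,x}|\le c_0$. Then for all $0\le x\le x_0$, $$\mathbb P(U_1^2+U_2^2\ge x^2)=\mathbb P(V_1^2+V_2^2\ge x^2)(1+\theta_x)$$ for some $\theta_x$ with $|\theta_x|\le3c_0$. *)

theory Defs
  imports "HOL-Probability.Probability"
begin

end

theory Submission imports Defs begin

lemma tailbnd:
  fixes th c p q :: real
  assumes "\<bar>th\<bar> \<le> c" "0 \<le> p" "q = p * (1 + th)"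
  shows "q \<le> (1 + c) * p" "(1 - c) * p \<le> q"
  using assms mult_left_mono[of th c p] mult_left_mono[of "-th" c p]
  by (auto simp: abs_le_iff algebra_simps)

lemma indep_pair:
  assumes P: "prob_space M" and ind: "prob_space.indep_vars M (\<lambda>_. borel) X I"
    and ij: "i \<in> I" "j \<in> I" "i \<noteq> j"
  shows "prob_space.indep_var M borel (X i) borel (X j)"
proof -
  interpret prob_space M by fact
  have rv: "\<And>k. k \<in> I \<Longrightarrow> random_variable borel (X k)" using ind by (auto simp: indep_vars_def)
  have isd: "indep_sets (\<lambda>k. sigma_sets (space M) {X k -` A \<inter> space M |A. A \<in> sets borel}) I"
    using ind by (auto simp: indep_vars_def)
  show ?thesis
    unfolding indep_var_eq indep_sets2_eq
  proof (intro conjI ballI)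
    show "random_variable borel (X i)" "random_variable borel (X j)" using rv ij by auto
    show "sigma_sets (space M) {X i -` A \<inter> space M |A. A \<in> sets borel} \<subseteq> events"
      using isd ij unfolding indep_sets_def by auto
    show "sigma_sets (space M) {X j -` A \<inter> space M |A. A \<in> sets borel} \<subseteq> events"
      using isd ij unfolding indep_sets_def by auto
    fix a b assume a: "a \<in> sigma_sets (space M) {X i -` A \<inter> space M |A. A \<in> sets borel}"
      and b: "b \<in> sigma_sets (space M) {X j -` A \<inter> space M |A. A \<in> sets borel}"
    define F where "F = (\<lambda>k. if k = i then a else b)"
    have "prob (\<Inter>k\<in>{i,j}. F k) = (\<Prod>k\<in>{i,j}. prob (F k))"
      by (rule indep_setsD[OF isd]) (use ij a b in \<open>auto simp: F_def\<close>)
    then show "prob (a \<inter> b) = prob a * prob b" using ij by (simp add: F_def Int_commute)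
  qed
qed

lemma (in prob_space) repr:
  fixes X Y :: "'a \<Rightarrow> real"
  assumes ind: "indep_var borel X borel Y"
  shows "emeasure M {\<omega> \<in> space M. x\<^sup>2 \<le> (X \<omega>)\<^sup>2 + (Y \<omega>)\<^sup>2}
    = (\<integral>\<^sup>+ b. emeasure M {\<omega> \<in> space M. sqrt (max 0 (x\<^sup>2 - b\<^sup>2)) \<le> \<bar>X \<omega>\<bar>} \<partial>(distr M borel Y))"
proof -
  have rvX: "random_variable borel X" and rvY: "random_variable borel Y"
    and eq: "distr M borel X \<Otimes>\<^sub>M distr M borel Y = distr M (borel \<Otimes>\<^sub>M borel) (\<lambda>x. (X x, Y x))"
    using ind unfolding indep_var_distribution_eq by auto
  define S where "S = {p \<in> space (borel \<Otimes>\<^sub>M borel). x\<^sup>2 \<le> (fst p :: real)\<^sup>2 + (snd p :: real)\<^sup>2}"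
  have S: "S \<in> sets (borel \<Otimes>\<^sub>M borel)" unfolding S_def by measurable
  have "emeasure M {\<omega> \<in> space M. x\<^sup>2 \<le> (X \<omega>)\<^sup>2 + (Y \<omega>)\<^sup>2}
      = emeasure (distr M (borel \<Otimes>\<^sub>M borel) (\<lambda>x. (X x, Y x))) S"
    using S rvX rvY by (subst emeasure_distr) (auto simp: S_def space_pair_measure intro!: arg_cong2[where f=emeasure])
  also have "\<dots> = emeasure (distr M borel X \<Otimes>\<^sub>M distr M borel Y) S" by (simp add: eq)
  also have "\<dots> = (\<integral>\<^sup>+ y. emeasure (distr M borel X) ((\<lambda>a. (a, y)) -` S) \<partial>(distr M borel Y))"
  proof -
    interpret PX: prob_space "distr M borel X" by (rule prob_space_distr[OF rvX])
    interpret PY: prob_space "distr M borel Y" by (rule prob_space_distr[OF rvY])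
    interpret pair_sigma_finite "distr M borel X" "distr M borel Y" ..
    show ?thesis by (rule emeasure_pair_measure_alt2) (use S in simp)
  qed
  also have "\<dots> = (\<integral>\<^sup>+ b. emeasure M {\<omega> \<in> space M. sqrt (max 0 (x\<^sup>2 - b\<^sup>2)) \<le> \<bar>X \<omega>\<bar>} \<partial>(distr M borel Y))"
  proof (rule nn_integral_cong)
    fix y :: real
    have S1e: "(\<lambda>a. (a, y)) -` S = {a \<in> space borel. x\<^sup>2 \<le> a\<^sup>2 + y\<^sup>2}" by (auto simp: S_def space_pair_measure)
    have S1: "(\<lambda>a. (a, y)) -` S \<in> sets borel" unfolding S1e by measurable
    have iff: "x\<^sup>2 \<le> a\<^sup>2 + y\<^sup>2 \<longleftrightarrow> sqrt (max 0 (x\<^sup>2 - y\<^sup>2)) \<le> \<bar>a\<bar>" for a :: real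
    proof -
      have "sqrt (max 0 (x\<^sup>2 - y\<^sup>2)) \<le> \<bar>a\<bar> \<longleftrightarrow> sqrt (max 0 (x\<^sup>2 - y\<^sup>2)) \<le> sqrt (a\<^sup>2)" by simp
      also have "\<dots> \<longleftrightarrow> max 0 (x\<^sup>2 - y\<^sup>2) \<le> a\<^sup>2" by (rule real_sqrt_le_iff)
      finally show ?thesis by auto
    qed
    show "emeasure (distr M borel X) ((\<lambda>a. (a, y)) -` S) = emeasure M {\<omega> \<in> space M. sqrt (max 0 (x\<^sup>2 - y\<^sup>2)) \<le> \<bar>X \<omega>\<bar>}"
      using S1 rvX by (subst emeasure_distr) (auto simp: S_def space_pair_measure iff intro!: arg_cong2[where f=emeasure])
  qed
  finally show ?thesis .
qed

lemma (in prob_space) meas_g: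
  fixes X' :: "'a \<Rightarrow> real"
  assumes rv: "X' \<in> borel_measurable M"
  shows "(\<lambda>b::real. ennreal (prob {\<omega> \<in> space M. sqrt (max 0 (x\<^sup>2 - b\<^sup>2)) \<le> \<bar>X' \<omega>\<bar>})) \<in> borel_measurable borel"
proof -
  define \<psi> where "\<psi> = (\<lambda>s::real. prob {\<omega> \<in> space M. sqrt (max 0 (x\<^sup>2 - s)) \<le> \<bar>X' \<omega>\<bar>})"
  have "mono \<psi>"
  proof (rule monoI)
    fix s1 s2 :: real assume "s1 \<le> s2"
    then have h: "sqrt (max 0 (x\<^sup>2 - s2)) \<le> sqrt (max 0 (x\<^sup>2 - s1))" by (intro real_sqrt_le_mono) auto
    show "\<psi> s1 \<le> \<psi> s2" unfolding \<psi>_def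
      using rv by (intro finite_measure_mono) (auto intro: order_trans[OF h], measurable)
  qed
  then have "\<psi> \<in> borel_measurable borel" by (rule borel_measurable_mono)
  then have "(\<lambda>b::real. \<psi> (b\<^sup>2)) \<in> borel_measurable borel" by measurable
  then show ?thesis unfolding \<psi>_def by measurable
qed

lemma (in prob_space) compare:
  fixes X X' Y :: "'a \<Rightarrow> real" and k x :: real
  assumes i1: "indep_var borel X borel Y" and i2: "indep_var borel X' borel Y" and x: "0 \<le> x"
    and k: "0 \<le> k"
  shows "(\<forall>t. 0 \<le> t \<and> t \<le> x \<longrightarrow> prob {\<omega> \<in> space M. t \<le> \<bar>X \<omega>\<bar>} \<le> k * prob {\<omega> \<in> space M. t \<le> \<bar>X' \<omega>\<bar>})
      \<Longrightarrow> prob {\<omega> \<in> space M. x\<^sup>2 \<le> (X \<omega>)\<^sup>2 + (Y \<omega>)\<^sup>2} \<le> k * prob {\<omega> \<in> space M. x\<^sup>2 \<le> (X' \<omega>)\<^sup>2 + (Y \<omega>)\<^sup>2}"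
    and "(\<forall>t. 0 \<le> t \<and> t \<le> x \<longrightarrow> k * prob {\<omega> \<in> space M. t \<le> \<bar>X' \<omega>\<bar>} \<le> prob {\<omega> \<in> space M. t \<le> \<bar>X \<omega>\<bar>})
      \<Longrightarrow> k * prob {\<omega> \<in> space M. x\<^sup>2 \<le> (X' \<omega>)\<^sup>2 + (Y \<omega>)\<^sup>2} \<le> prob {\<omega> \<in> space M. x\<^sup>2 \<le> (X \<omega>)\<^sup>2 + (Y \<omega>)\<^sup>2}"
proof -
  have rv2: "X' \<in> borel_measurable M" using i2 by (simp add: indep_var_distribution_eq)
  define t where "t = (\<lambda>b::real. sqrt (max 0 (x\<^sup>2 - b\<^sup>2)))"
  have t: "0 \<le> t b \<and> t b \<le> x" for b
  proof -
    have "t b \<le> sqrt (x\<^sup>2)" unfolding t_def by (intro real_sqrt_le_mono) auto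
    then show ?thesis using x by (simp add: t_def)
  qed
  have r1: "ennreal (prob {\<omega> \<in> space M. x\<^sup>2 \<le> (X \<omega>)\<^sup>2 + (Y \<omega>)\<^sup>2}) = (\<integral>\<^sup>+ b. ennreal (prob {\<omega> \<in> space M. t b \<le> \<bar>X \<omega>\<bar>}) \<partial>(distr M borel Y))"
    using repr[OF i1, of x] by (simp add: emeasure_eq_measure t_def)
  have r2: "ennreal (prob {\<omega> \<in> space M. x\<^sup>2 \<le> (X' \<omega>)\<^sup>2 + (Y \<omega>)\<^sup>2}) = (\<integral>\<^sup>+ b. ennreal (prob {\<omega> \<in> space M. t b \<le> \<bar>X' \<omega>\<bar>}) \<partial>(distr M borel Y))"
    using repr[OF i2, of x] by (simp add: emeasure_eq_measure t_def)
  {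
    assume h: "\<forall>t. 0 \<le> t \<and> t \<le> x \<longrightarrow> prob {\<omega> \<in> space M. t \<le> \<bar>X \<omega>\<bar>} \<le> k * prob {\<omega> \<in> space M. t \<le> \<bar>X' \<omega>\<bar>}"
    have "ennreal (prob {\<omega> \<in> space M. x\<^sup>2 \<le> (X \<omega>)\<^sup>2 + (Y \<omega>)\<^sup>2}) \<le> (\<integral>\<^sup>+ b. ennreal k * ennreal (prob {\<omega> \<in> space M. t b \<le> \<bar>X' \<omega>\<bar>}) \<partial>(distr M borel Y))"
      unfolding r1 using h t k by (intro nn_integral_mono) (simp add: ennreal_mult[symmetric] ennreal_leI)
    also have "\<dots> = ennreal k * ennreal (prob {\<omega> \<in> space M. x\<^sup>2 \<le> (X' \<omega>)\<^sup>2 + (Y \<omega>)\<^sup>2})"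
      unfolding r2 t_def by (rule nn_integral_cmult) (use meas_g[OF rv2] in simp)
    finally show "prob {\<omega> \<in> space M. x\<^sup>2 \<le> (X \<omega>)\<^sup>2 + (Y \<omega>)\<^sup>2} \<le> k * prob {\<omega> \<in> space M. x\<^sup>2 \<le> (X' \<omega>)\<^sup>2 + (Y \<omega>)\<^sup>2}"
      using k by (simp add: ennreal_mult[symmetric])
  }
  {
    assume h: "\<forall>t. 0 \<le> t \<and> t \<le> x \<longrightarrow> k * prob {\<omega> \<in> space M. t \<le> \<bar>X' \<omega>\<bar>} \<le> prob {\<omega> \<in> space M. t \<le> \<bar>X \<omega>\<bar>}"
    have "ennreal k * ennreal (prob {\<omega> \<in> space M. x\<^sup>2 \<le> (X' \<omega>)\<^sup>2 + (Y \<omega>)\<^sup>2}) = (\<integral>\<^sup>+ b. ennreal k * ennreal (prob {\<omega> \<in> space M. t b \<le> \<bar>X' \<omega>\<bar>}) \<partial>(distr M borel Y))"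
      unfolding r2 t_def by (rule nn_integral_cmult[symmetric]) (use meas_g[OF rv2] in simp)
    also have "\<dots> \<le> ennreal (prob {\<omega> \<in> space M. x\<^sup>2 \<le> (X \<omega>)\<^sup>2 + (Y \<omega>)\<^sup>2})"
      unfolding r1 using h t k by (intro nn_integral_mono) (simp add: ennreal_mult[symmetric] ennreal_leI)
    finally show "k * prob {\<omega> \<in> space M. x\<^sup>2 \<le> (X' \<omega>)\<^sup>2 + (Y \<omega>)\<^sup>2} \<le> prob {\<omega> \<in> space M. x\<^sup>2 \<le> (X \<omega>)\<^sup>2 + (Y \<omega>)\<^sup>2}"
      using k by (simp add: ennreal_mult[symmetric])
  }
qed



theorem lemma6p3:
  fixes M :: "'a measure" and U1 U2 V1 V2 :: "'a \<Rightarrow> real" and c0 x0 :: real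
  assumes "prob_space M"
    and "prob_space.indep_vars M (\<lambda>_. borel) (\<lambda>i. [U1, U2, V1, V2] ! i) {0..<4}"
    and "0 \<le> c0" and "c0 \<le> 1" and "x0 > 0"
    and "\<forall>x. 0 \<le> x \<and> x \<le> x0 \<longrightarrow> (\<exists>\<theta>. \<bar>\<theta>\<bar> \<le> c0 \<and>
           measure M {\<omega> \<in> space M. \<bar>U1 \<omega>\<bar> \<ge> x} = measure M {\<omega> \<in> space M. \<bar>V1 \<omega>\<bar> \<ge> x} * (1 + \<theta>))"
    and "\<forall>x. 0 \<le> x \<and> x \<le> x0 \<longrightarrow> (\<exists>\<theta>. \<bar>\<theta>\<bar> \<le> c0 \<and>
           measure M {\<omega> \<in> space M. \<bar>U2 \<omega>\<bar> \<ge> x} = measure M {\<omega> \<in> space M. \<bar>V2 \<omega>\<bar> \<ge> x} * (1 + \<theta>))"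
  shows "\<forall>x. 0 \<le> x \<and> x \<le> x0 \<longrightarrow> (\<exists>\<theta>. \<bar>\<theta>\<bar> \<le> 3 * c0 \<and>
           measure M {\<omega> \<in> space M. (U1 \<omega>)\<^sup>2 + (U2 \<omega>)\<^sup>2 \<ge> x\<^sup>2}
             = measure M {\<omega> \<in> space M. (V1 \<omega>)\<^sup>2 + (V2 \<omega>)\<^sup>2 \<ge> x\<^sup>2} * (1 + \<theta>))"
  proof (intro allI impI)
  interpret prob_space M by fact
  fix x :: real assume x: "0 \<le> x \<and> x \<le> x0"
  note ind = assms(2)
  have iv: "indep_var borel ([U1, U2, V1, V2] ! i) borel ([U1, U2, V1, V2] ! j)"
    if "i < 4" "j < 4" "i \<noteq> j" for i j
    using indep_pair[OF assms(1) ind, of i j] that by simp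
  have i12: "indep_var borel U1 borel U2" using iv[of 0 1] by simp
  have i32: "indep_var borel V1 borel U2" using iv[of 2 1] by simp
  have i23: "indep_var borel U2 borel V1" using iv[of 1 2] by simp
  have i43: "indep_var borel V2 borel V1" using iv[of 3 2] by simp
  have b1u: "prob {\<omega> \<in> space M. t \<le> \<bar>U1 \<omega>\<bar>} \<le> (1 + c0) * prob {\<omega> \<in> space M. t \<le> \<bar>V1 \<omega>\<bar>}"
    and b1l: "(1 - c0) * prob {\<omega> \<in> space M. t \<le> \<bar>V1 \<omega>\<bar>} \<le> prob {\<omega> \<in> space M. t \<le> \<bar>U1 \<omega>\<bar>}"
    if tx: "0 \<le> t \<and> t \<le> x" for t
  proof -
    obtain th where h1: "\<bar>th\<bar> \<le> c0" and h2: "prob {\<omega> \<in> space M. \<bar>U1 \<omega>\<bar> \<ge> t} = prob {\<omega> \<in> space M. \<bar>V1 \<omega>\<bar> \<ge> t} * (1 + th)"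
      using assms(6) tx x by force
    have h3: "prob {\<omega> \<in> space M. t \<le> \<bar>V1 \<omega>\<bar>} \<ge> 0" by simp
    show "prob {\<omega> \<in> space M. t \<le> \<bar>U1 \<omega>\<bar>} \<le> (1 + c0) * prob {\<omega> \<in> space M. t \<le> \<bar>V1 \<omega>\<bar>}"
      using tailbnd(1)[OF h1 h3 h2] .
    show "(1 - c0) * prob {\<omega> \<in> space M. t \<le> \<bar>V1 \<omega>\<bar>} \<le> prob {\<omega> \<in> space M. t \<le> \<bar>U1 \<omega>\<bar>}"
      using tailbnd(2)[OF h1 h3 h2] .
  qed
  have b2u: "prob {\<omega> \<in> space M. t \<le> \<bar>U2 \<omega>\<bar>} \<le> (1 + c0) * prob {\<omega> \<in> space M. t \<le> \<bar>V2 \<omega>\<bar>}"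
    and b2l: "(1 - c0) * prob {\<omega> \<in> space M. t \<le> \<bar>V2 \<omega>\<bar>} \<le> prob {\<omega> \<in> space M. t \<le> \<bar>U2 \<omega>\<bar>}"
    if tx: "0 \<le> t \<and> t \<le> x" for t
  proof -
    obtain th where h1: "\<bar>th\<bar> \<le> c0" and h2: "prob {\<omega> \<in> space M. \<bar>U2 \<omega>\<bar> \<ge> t} = prob {\<omega> \<in> space M. \<bar>V2 \<omega>\<bar> \<ge> t} * (1 + th)"
      using assms(7) tx x by force
    have h3: "prob {\<omega> \<in> space M. t \<le> \<bar>V2 \<omega>\<bar>} \<ge> 0" by simp
    show "prob {\<omega> \<in> space M. t \<le> \<bar>U2 \<omega>\<bar>} \<le> (1 + c0) * prob {\<omega> \<in> space M. t \<le> \<bar>V2 \<omega>\<bar>}"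
      using tailbnd(1)[OF h1 h3 h2] .
    show "(1 - c0) * prob {\<omega> \<in> space M. t \<le> \<bar>V2 \<omega>\<bar>} \<le> prob {\<omega> \<in> space M. t \<le> \<bar>U2 \<omega>\<bar>}"
      using tailbnd(2)[OF h1 h3 h2] .
  qed
  define a where "a = prob {\<omega> \<in> space M. x\<^sup>2 \<le> (U1 \<omega>)\<^sup>2 + (U2 \<omega>)\<^sup>2}"
  define b where "b = prob {\<omega> \<in> space M. x\<^sup>2 \<le> (V1 \<omega>)\<^sup>2 + (U2 \<omega>)\<^sup>2}"
  define c where "c = prob {\<omega> \<in> space M. x\<^sup>2 \<le> (V1 \<omega>)\<^sup>2 + (V2 \<omega>)\<^sup>2}"
  have bb: "b = prob {\<omega> \<in> space M. x\<^sup>2 \<le> (U2 \<omega>)\<^sup>2 + (V1 \<omega>)\<^sup>2}"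
    unfolding b_def by (simp add: add.commute)
  have cc: "c = prob {\<omega> \<in> space M. x\<^sup>2 \<le> (V2 \<omega>)\<^sup>2 + (V1 \<omega>)\<^sup>2}"
    unfolding c_def by (simp add: add.commute)
  have c0: "0 \<le> c0" "c0 \<le> 1" using assms by auto
  have ab1: "a \<le> (1 + c0) * b" unfolding a_def b_def
    by (rule compare(1)[OF i12 i32]) (use x c0 b1u in auto)
  have ab2: "(1 - c0) * b \<le> a" unfolding a_def b_def
    by (rule compare(2)[OF i12 i32]) (use x c0 b1l in auto)
  have bc1: "b \<le> (1 + c0) * c" unfolding bb cc
    by (rule compare(1)[OF i23 i43]) (use x c0 b2u in auto)
  have bc2: "(1 - c0) * c \<le> b" unfolding bb cc
    by (rule compare(2)[OF i23 i43]) (use x c0 b2l in auto)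
  have cpos: "0 \<le> c" unfolding c_def by simp
  have up: "a \<le> (1 + c0) * ((1 + c0) * c)"
    using ab1 bc1 c0 by (meson order_trans mult_left_mono add_nonneg_nonneg zero_le_one)
  have lo: "(1 - c0) * ((1 - c0) * c) \<le> a"
    using ab2 bc2 c0 by (meson order_trans mult_left_mono diff_ge_0_iff_ge)
  have sq: "c0 * c0 \<le> c0" using c0 by (simp add: mult_left_le)
  have cc0: "c0 * c0 * c \<le> c0 * c" using sq cpos by (simp add: mult_right_mono)
  have d1: "a - c \<le> 3 * c0 * c" using up cc0 cpos c0 by (simp add: algebra_simps)
  have d2: "c - a \<le> 3 * c0 * c" proof -
    have n1: "0 \<le> c0 * c" "0 \<le> c0 * (c0 * c)" using cpos c0 by simp_all
    have "(1 - c0) * ((1 - c0) * c) = c - 2 * (c0 * c) + c0 * (c0 * c)" by (simp add: algebra_simps)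
    then show ?thesis using lo n1 by linarith
  qed
  show "\<exists>\<theta>. \<bar>\<theta>\<bar> \<le> 3 * c0 \<and>
           measure M {\<omega> \<in> space M. (U1 \<omega>)\<^sup>2 + (U2 \<omega>)\<^sup>2 \<ge> x\<^sup>2}
             = measure M {\<omega> \<in> space M. (V1 \<omega>)\<^sup>2 + (V2 \<omega>)\<^sup>2 \<ge> x\<^sup>2} * (1 + \<theta>)"
  proof (cases "c = 0")
    case True
    have "0 \<le> a" by (simp add: a_def)
    then have "a = 0" using d1 True by simp 
    then show ?thesis using True c0 by (intro exI[of _ 0]) (simp add: a_def c_def)
  next
    case False
    then have cp: "c > 0" using cpos by simp
    have "\<bar>(a - c) / c\<bar> \<le> 3 * c0"
      using d1 d2 cp by (simp add: abs_le_iff pos_divide_le_eq pos_le_divide_eq mult_ac)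
    moreover have "a = c * (1 + (a - c) / c)" using cp by (simp add: field_simps)
    ultimately show ?thesis by (intro exI[of _ "(a - c) / c"]) (simp add: a_def c_def)
  qed
qed

end
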